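(* Let $F \leq F' \leq \hat F$ and $H\leq H'\leq \hat H$ be permutation groups on $\Omega$ with $F\leq H$ and $F'\leq H'$. Suppose that $H\cap F'=F$ and $H'=HF'$. Then $G(F,F')$ is a closed cocompact subgroup of $G(H,H')$. If moreover $F$ acts freely on $\Omega$, then $G(F,F')$ is a cocompact lattice in $G(H,H')$.
   Context: Standing notation. $\Omega$ is a finite set with $d=|\Omega|\geq 3$, $\mathcal{T}_d$ is the $d$-regular tree with vertex set $V$ and set $E$ of non-oriented edges, and $\mathrm{Aut}(\mathcal{T}_d)$ carries the permutation topology. Fix a coloring $c:E\to\Omega$ such that for every vertex $v$ its restriction $c_v$ to the set $E(v)$ of edges containing $v$ is a bijection onto $\Omega$. For $g\in\mathrm{Aut}(\mathcal{T}_d)$ and $v\in V$, the local permutation is $\sigma(g,v)=c_{gv}\circ g_v\circ c_v^{-1}\in\mathrm{Sym}(\Omega)$, where $g_v:E(v)\to E(gv)$ is induced by $g$. For $F\leq\mathrm{Sym}(\Omega)$: $U(F)=\{g:\sigma(g,v)\in F \ \forall v\}$; $G(F)=\{g:\sigma(g,v)\in F \text{ for all but finitely many } v\}$; $\hat F$ is the subgroup of permutations preserving each $F$-orbit. For $F\leq F'\leq\hat F$, $G(F,F')=G(F)\cap U(F')$, endowed with the unique group topology for which the inclusion $U(F)\hookrightarrow G(F,F')$ is continuous and open ($U(F)$ with the topology induced from $\mathrm{Aut}(\mathcal{T}_d)$). *)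

theory Defs
  imports "HOL-Analysis.Analysis"
begin

text \<open>Model of the d-regular tree T_d with its legal colouring, d = CARD('a):
  vertices are reduced words over Omega (no two consecutive letters equal),
  edges join w and w@[a]; the edge {w, w@[a]} has colour a.\<close>

definition tverts :: "'a list set" where
  "tverts = {w. successively (\<noteq>) w}"

definition tadj :: "'a list \<Rightarrow> 'a list \<Rightarrow> bool" where
  "tadj u w \<longleftrightarrow> u \<in> tverts \<and> w \<in> tverts \<and> (\<exists>a. w = u @ [a] \<or> u = w @ [a])"

definition tcol :: "'a list \<Rightarrow> 'a list \<Rightarrow> 'a" where
  "tcol u w = (if length u < length w then last w else last u)"

text \<open>the neighbour of v along the edge of colour a, i.e. c_v^{-1}(a)\<close>
definition tnb :: "'a list \<Rightarrow> 'a \<Rightarrow> 'a list" where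
  "tnb v a = (if v \<noteq> [] \<and> last v = a then butlast v else v @ [a])"

definition tAut :: "('a list \<Rightarrow> 'a list) set" where
  "tAut = {g. bij g \<and> g ` tverts = tverts \<and> (\<forall>x. x \<notin> tverts \<longrightarrow> g x = x)
              \<and> (\<forall>u\<in>tverts. \<forall>w\<in>tverts. tadj (g u) (g w) \<longleftrightarrow> tadj u w)}"

text \<open>local permutation sigma(g,v) = c_{gv} o g_v o c_v^{-1}\<close>
definition sigma :: "('a list \<Rightarrow> 'a list) \<Rightarrow> 'a list \<Rightarrow> 'a \<Rightarrow> 'a" where
  "sigma g v = (\<lambda>a. tcol (g v) (g (tnb v a)))"

text \<open>permutation groups on Omega (= UNIV :: 'a set)\<close>
definition perm_group :: "('a \<Rightarrow> 'a) set \<Rightarrow> bool" where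
  "perm_group F \<longleftrightarrow> (\<forall>f\<in>F. bij f) \<and> id \<in> F \<and> (\<forall>f\<in>F. \<forall>g\<in>F. f \<circ> g \<in> F)
                     \<and> (\<forall>f\<in>F. inv f \<in> F)"

definition hat :: "('a \<Rightarrow> 'a) set \<Rightarrow> ('a \<Rightarrow> 'a) set" where
  "hat F = {p. bij p \<and> (\<forall>x. \<exists>f\<in>F. p x = f x)}"

definition acts_freely :: "('a \<Rightarrow> 'a) set \<Rightarrow> bool" where
  "acts_freely F \<longleftrightarrow> (\<forall>f\<in>F. \<forall>x. f x = x \<longrightarrow> f = id)"

definition setprod :: "('a \<Rightarrow> 'a) set \<Rightarrow> ('a \<Rightarrow> 'a) set \<Rightarrow> ('a \<Rightarrow> 'a) set" where
  "setprod H F = {h \<circ> f | h f. h \<in> H \<and> f \<in> F}"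

definition U :: "('a \<Rightarrow> 'a) set \<Rightarrow> ('a list \<Rightarrow> 'a list) set" where
  "U F = {g \<in> tAut. \<forall>v\<in>tverts. sigma g v \<in> F}"

definition G :: "('a \<Rightarrow> 'a) set \<Rightarrow> ('a list \<Rightarrow> 'a list) set" where
  "G F = {g \<in> tAut. finite {v \<in> tverts. sigma g v \<notin> F}}"

definition G2 :: "('a \<Rightarrow> 'a) set \<Rightarrow> ('a \<Rightarrow> 'a) set \<Rightarrow> ('a list \<Rightarrow> 'a list) set" where
  "G2 F F' = G F \<inter> U F'"

definition fixU :: "('a \<Rightarrow> 'a) set \<Rightarrow> 'a list set \<Rightarrow> ('a list \<Rightarrow> 'a list) set" where
  "fixU F S = {k \<in> U F. \<forall>s\<in>S. k s = s}"

text \<open>The group topology on G(F,F') for which U(F) (with the permutation topology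
  induced from Aut(T_d)) is an open subgroup: a basis of neighbourhoods of g is
  given by the cosets g * Fix_{U(F)}(S), S a finite set of vertices.\<close>
definition Gtop :: "('a \<Rightarrow> 'a) set \<Rightarrow> ('a \<Rightarrow> 'a) set \<Rightarrow> ('a list \<Rightarrow> 'a list) topology" where
  "Gtop F F' = topology (\<lambda>W. W \<subseteq> G2 F F' \<and>
      (\<forall>g\<in>W. \<exists>S. finite S \<and> S \<subseteq> tverts \<and> (\<lambda>k. g \<circ> k) ` fixU F S \<subseteq> W))"

definition is_subgroup :: "('a list \<Rightarrow> 'a list) set \<Rightarrow> ('a list \<Rightarrow> 'a list) set \<Rightarrow> bool" where
  "is_subgroup \<Gamma> Grp \<longleftrightarrow> \<Gamma> \<subseteq> Grp \<and> id \<in> \<Gamma> \<and> (\<forall>x\<in>\<Gamma>. \<forall>y\<in>\<Gamma>. x \<circ> y \<in> \<Gamma>)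
                            \<and> (\<forall>x\<in>\<Gamma>. inv x \<in> \<Gamma>)"

definition cocompact :: "('b \<Rightarrow> 'b) topology \<Rightarrow> ('b \<Rightarrow> 'b) set \<Rightarrow> bool" where
  "cocompact T \<Gamma> \<longleftrightarrow> (\<exists>K. compactin T K \<and> {k \<circ> \<gamma> | k \<gamma>. k \<in> K \<and> \<gamma> \<in> \<Gamma>} = topspace T)"

definition discrete_in :: "'b topology \<Rightarrow> 'b set \<Rightarrow> bool" where
  "discrete_in T \<Gamma> \<longleftrightarrow> subtopology T \<Gamma> = discrete_topology \<Gamma>"

definition cocompact_lattice :: "('b \<Rightarrow> 'b) topology \<Rightarrow> ('b \<Rightarrow> 'b) set \<Rightarrow> bool" where
  "cocompact_lattice T \<Gamma> \<longleftrightarrow> discrete_in T \<Gamma> \<and> cocompact T \<Gamma>"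

end

theory Submission
  imports Defs "HOL-Analysis.Analysis"
begin


lemma tnb_tverts: "v \<in> tverts \<Longrightarrow> tnb v a \<in> tverts"
  unfolding tverts_def tnb_def
  apply (cases v rule: rev_cases)
  by (auto simp: successively_append_iff butlast_append)

lemma tnb_tnb: "v \<in> tverts \<Longrightarrow> tnb (tnb v a) a = v"
  unfolding tverts_def tnb_def
  apply (cases v rule: rev_cases)
  by (auto simp: successively_append_iff butlast_append)

lemma tcol_tnb[simp]: "tcol v (tnb v a) = a"
  unfolding tcol_def tnb_def
  apply (cases v rule: rev_cases)
  by auto

lemma tnb_inj: "tnb v a = tnb v b \<Longrightarrow> a = b"
  by (metis tcol_tnb)

lemma tadj_iff: "tadj u w \<longleftrightarrow> u \<in> tverts \<and> w \<in> tverts \<and> (\<exists>a. w = tnb u a)"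
  unfolding tadj_def
proof (intro iffI; elim conjE exE; intro conjI)
  fix a assume u: "u \<in> tverts" and w: "w \<in> tverts" and h: "w = u @ [a] \<or> u = w @ [a]"
  show "\<exists>a. w = tnb u a"
  proof (cases "w = u @ [a]")
    case True
    then have "u = [] \<or> last u \<noteq> a" using w unfolding tverts_def
      by (cases u rule: rev_cases) (auto simp: successively_append_iff)
    then show ?thesis using True unfolding tnb_def by auto
  next
    case False
    then have "u = w @ [a]" using h by auto
    then show ?thesis unfolding tnb_def by auto
  qed
next
  fix a assume u: "u \<in> tverts" and w: "w \<in> tverts" and h: "w = tnb u a"
  show "\<exists>a. w = u @ [a] \<or> u = w @ [a]" using h unfolding tnb_def
    by (cases u rule: rev_cases) (auto split: if_splits)
qed auto

lemma sigma_id: "sigma id v = id"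
  by (auto simp: sigma_def)


lemma aut_tverts: "g \<in> tAut \<Longrightarrow> v \<in> tverts \<Longrightarrow> g v \<in> tverts"
  by (auto simp: tAut_def)

lemma aut_out: "g \<in> tAut \<Longrightarrow> v \<notin> tverts \<Longrightarrow> g v = v"
  by (simp add: tAut_def)

lemma aut_bij: "g \<in> tAut \<Longrightarrow> bij g"
  by (simp add: tAut_def)

lemma aut_adj: "g \<in> tAut \<Longrightarrow> u \<in> tverts \<Longrightarrow> w \<in> tverts \<Longrightarrow> tadj (g u) (g w) \<longleftrightarrow> tadj u w"
  by (simp add: tAut_def)

lemma aut_tnb: assumes "g \<in> tAut" "v \<in> tverts"
  shows "g (tnb v a) = tnb (g v) (sigma g v a)"
proof -
  have t: "tnb v a \<in> tverts" using assms(2) by (rule tnb_tverts)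
  have "tadj v (tnb v a)" using assms(2) t by (auto simp: tadj_iff)
  then have "tadj (g v) (g (tnb v a))" using aut_adj[OF assms(1,2) t] by simp
  then obtain e where e: "g (tnb v a) = tnb (g v) e" by (auto simp: tadj_iff)
  then have "sigma g v a = e" by (simp add: sigma_def)
  then show ?thesis using e by simp
qed

lemma sigma_inj: assumes "g \<in> tAut" "v \<in> tverts" shows "inj (sigma g v)"
proof
  fix a b assume h: "sigma g v a = sigma g v b"
  have "g (tnb v a) = g (tnb v b)" using aut_tnb[OF assms, of a] aut_tnb[OF assms, of b] h by simp
  then have "tnb v a = tnb v b" using aut_bij[OF assms(1)] bij_is_inj injD by metis
  then show "a = b" by (rule tnb_inj)
qed

lemma sigma_bij: fixes g :: "'a::finite list \<Rightarrow> 'a list" assumes "g \<in> tAut" "v \<in> tverts" shows "bij (sigma g v)"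
  using sigma_inj[OF assms] finite_UNIV_inj_surj[of "sigma g v"] by (simp add: bij_def)

lemma id_aut: "id \<in> tAut"
  unfolding tAut_def by auto

lemma aut_comp: assumes "g \<in> tAut" "k \<in> tAut" shows "g \<circ> k \<in> tAut"
proof -
  have "bij (g \<circ> k)" using assms aut_bij bij_comp by blast
  moreover have "(g \<circ> k) ` tverts = tverts"
  proof -
    have "(g \<circ> k) ` tverts = g ` (k ` tverts)" by (simp add: image_comp)
    then show ?thesis using assms by (simp add: tAut_def)
  qed
  moreover have "\<forall>x. x \<notin> tverts \<longrightarrow> (g \<circ> k) x = x"
  proof (intro allI impI)
    fix x :: "'a list" assume "x \<notin> tverts"
    then show "(g \<circ> k) x = x" using aut_out[OF assms(2)] aut_out[OF assms(1)] by simp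
  qed
  moreover have "\<forall>u\<in>tverts. \<forall>w\<in>tverts. tadj ((g \<circ> k) u) ((g \<circ> k) w) \<longleftrightarrow> tadj u w"
  proof (intro ballI)
    fix u w :: "'a list" assume uw: "u \<in> tverts" "w \<in> tverts"
    have "tadj (g (k u)) (g (k w)) \<longleftrightarrow> tadj (k u) (k w)"
      using aut_adj[OF assms(1) aut_tverts[OF assms(2) uw(1)] aut_tverts[OF assms(2) uw(2)]] .
    also have "\<dots> \<longleftrightarrow> tadj u w" using aut_adj[OF assms(2) uw] .
    finally show "tadj ((g \<circ> k) u) ((g \<circ> k) w) \<longleftrightarrow> tadj u w" by simp
  qed
  ultimately show ?thesis by (simp add: tAut_def)
qed

lemma sigma_comp: assumes "g \<in> tAut" "k \<in> tAut" "v \<in> tverts"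
  shows "sigma (g \<circ> k) v = sigma g (k v) \<circ> sigma k v"
proof
  fix a
  have "(g \<circ> k) (tnb v a) = g (tnb (k v) (sigma k v a))" using aut_tnb[OF assms(2,3)] by simp
  also have "\<dots> = tnb (g (k v)) (sigma g (k v) (sigma k v a))"
    using aut_tnb[OF assms(1) aut_tverts[OF assms(2,3)]] by simp
  finally show "sigma (g \<circ> k) v a = (sigma g (k v) \<circ> sigma k v) a"
    by (simp add: sigma_def)
qed

lemma aut_inv: assumes "g \<in> tAut" shows "inv g \<in> tAut"
proof -
  have b: "bij g" using assms aut_bij by blast
  have im: "g ` tverts = tverts" using assms by (simp add: tAut_def)
  have "bij (inv g)" using b bij_imp_bij_inv by blast
  moreover have "inv g ` tverts = tverts" using im b by (metis bij_def image_inv_f_f)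
  moreover have "\<forall>x. x \<notin> tverts \<longrightarrow> inv g x = x" using assms aut_out b
    by (metis bij_inv_eq_iff)
  moreover have "\<forall>u\<in>tverts. \<forall>w\<in>tverts. tadj (inv g u) (inv g w) \<longleftrightarrow> tadj u w"
  proof (intro ballI)
    fix u w :: "'a list" assume uw: "u \<in> tverts" "w \<in> tverts"
    have i: "inv g ` tverts = tverts" by fact
    have "inv g u \<in> tverts" "inv g w \<in> tverts" using i uw by blast+
    moreover have "g (inv g u) = u" "g (inv g w) = w" using b bij_is_surj surj_f_inv_f by metis+
    ultimately show "tadj (inv g u) (inv g w) \<longleftrightarrow> tadj u w"
      using aut_adj[OF assms, of "inv g u" "inv g w"] by simp
  qed
  ultimately show ?thesis by (simp add: tAut_def)
qed

lemma aut_inv_tverts: "g \<in> tAut \<Longrightarrow> v \<in> tverts \<Longrightarrow> inv g v \<in> tverts"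
  using aut_inv aut_tverts by blast

lemma aut_f_inv: "g \<in> tAut \<Longrightarrow> g (inv g x) = x"
  using aut_bij bij_inv_eq_iff by metis

lemma aut_inv_f: "g \<in> tAut \<Longrightarrow> inv g (g x) = x"
  using aut_bij bij_inv_eq_iff by metis

lemma aut_comp_inv: "g \<in> tAut \<Longrightarrow> g \<circ> inv g = id"
  using aut_f_inv by fastforce

lemma aut_inv_comp: "g \<in> tAut \<Longrightarrow> inv g \<circ> g = id"
  using aut_inv_f by fastforce

lemma comp_id_inv: assumes "bij p" "p \<circ> q = id" shows "q = inv p"
proof -
  have "q = (inv p \<circ> p) \<circ> q" using assms bij_is_inj inv_o_cancel by (metis id_comp)
  also have "\<dots> = inv p" using assms by (simp add: o_assoc[symmetric])
  finally show ?thesis .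
qed

lemma sigma_inv: fixes g :: "'a::finite list \<Rightarrow> 'a list" assumes "g \<in> tAut" "v \<in> tverts"
  shows "sigma (inv g) v = inv (sigma g (inv g v))"
proof -
  have "sigma (g \<circ> inv g) v = sigma g (inv g v) \<circ> sigma (inv g) v"
    using sigma_comp assms aut_inv by blast
  then have "sigma g (inv g v) \<circ> sigma (inv g) v = id" using aut_comp_inv[OF assms(1)] sigma_id by metis
  then show ?thesis using comp_id_inv sigma_bij assms aut_inv_tverts by blast
qed


lemma pg_bij: "perm_group F \<Longrightarrow> f \<in> F \<Longrightarrow> bij f"
  by (simp add: perm_group_def)
lemma pg_id: "perm_group F \<Longrightarrow> id \<in> F"
  by (simp add: perm_group_def)
lemma pg_comp: "perm_group F \<Longrightarrow> f \<in> F \<Longrightarrow> g \<in> F \<Longrightarrow> f \<circ> g \<in> F"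
  by (simp add: perm_group_def)
lemma pg_inv: "perm_group F \<Longrightarrow> f \<in> F \<Longrightarrow> inv f \<in> F"
  by (simp add: perm_group_def)
lemma pg_inv_iff: assumes "perm_group F" "bij f" shows "inv f \<in> F \<longleftrightarrow> f \<in> F"
proof
  assume "inv f \<in> F"
  then have "inv (inv f) \<in> F" using pg_inv assms by blast
  then show "f \<in> F" using assms(2) inv_inv_eq by metis
qed (use pg_inv assms in blast)

lemma U_aut: "g \<in> U F \<Longrightarrow> g \<in> tAut" by (simp add: U_def)
lemma U_sig: "g \<in> U F \<Longrightarrow> v \<in> tverts \<Longrightarrow> sigma g v \<in> F" by (simp add: U_def)
lemma G_aut: "g \<in> G F \<Longrightarrow> g \<in> tAut" by (simp add: G_def)

lemma id_U: "perm_group F \<Longrightarrow> id \<in> U F"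
  by (simp add: U_def id_aut sigma_id pg_id)

lemma U_comp: assumes "perm_group F" "g \<in> U F" "k \<in> U F" shows "g \<circ> k \<in> U F"
proof -
  have a: "g \<in> tAut" "k \<in> tAut" using assms U_aut by blast+
  have "sigma (g \<circ> k) v \<in> F" if v: "v \<in> tverts" for v
  proof -
    have "sigma (g \<circ> k) v = sigma g (k v) \<circ> sigma k v" using sigma_comp[OF a v] .
    moreover have "sigma g (k v) \<in> F" using U_sig[OF assms(2) aut_tverts[OF a(2) v]] .
    moreover have "sigma k v \<in> F" using U_sig[OF assms(3) v] .
    ultimately show ?thesis using pg_comp[OF assms(1)] by simp
  qed
  then show ?thesis using aut_comp[OF a] by (simp add: U_def)
qed

lemma U_inv: fixes g :: "'a::finite list \<Rightarrow> 'a list"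
  assumes "perm_group F" "g \<in> U F" shows "inv g \<in> U F"
proof -
  have a: "g \<in> tAut" using assms U_aut by blast
  have "sigma (inv g) v \<in> F" if v: "v \<in> tverts" for v
  proof -
    have "sigma (inv g) v = inv (sigma g (inv g v))" using sigma_inv[OF a v] .
    moreover have "sigma g (inv g v) \<in> F" using U_sig[OF assms(2) aut_inv_tverts[OF a v]] .
    ultimately show ?thesis using pg_inv[OF assms(1)] by simp
  qed
  then show ?thesis using aut_inv[OF a] by (simp add: U_def)
qed

lemma U_G: "U F \<subseteq> G F"
proof
  fix g assume g: "g \<in> U F"
  then have e: "{v \<in> tverts. sigma g v \<notin> F} = {}" by (auto simp: U_def)
  have "finite {v \<in> tverts. sigma g v \<notin> F}" by (subst e) simp
  then show "g \<in> G F" using U_aut[OF g] by (simp add: G_def)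
qed

lemma U_mono: "F \<subseteq> F' \<Longrightarrow> U F \<subseteq> U F'"
  by (auto simp: U_def)

lemma G_mono: assumes "F \<subseteq> F'" shows "G F \<subseteq> G F'"
proof
  fix g assume g: "g \<in> G F"
  have "{v \<in> tverts. sigma g v \<notin> F'} \<subseteq> {v \<in> tverts. sigma g v \<notin> F}" using assms by auto
  then show "g \<in> G F'" using g finite_subset by (auto simp: G_def)
qed

lemma id_G: "perm_group F \<Longrightarrow> id \<in> G F"
  using id_U U_G by blast

lemma G_comp: assumes "perm_group F" "g \<in> G F" "k \<in> G F" shows "g \<circ> k \<in> G F"
proof -
  have a: "g \<in> tAut" "k \<in> tAut" using assms G_aut by blast+
  have fg: "finite {v \<in> tverts. sigma g v \<notin> F}" "finite {v \<in> tverts. sigma k v \<notin> F}"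
    using assms(2,3) by (simp_all add: G_def)
  have "{v \<in> tverts. sigma (g \<circ> k) v \<notin> F} \<subseteq> {v \<in> tverts. sigma k v \<notin> F} \<union> inv k ` {w \<in> tverts. sigma g w \<notin> F}"
  proof
    fix v assume "v \<in> {v \<in> tverts. sigma (g \<circ> k) v \<notin> F}"
    then have v: "v \<in> tverts" and n: "sigma (g \<circ> k) v \<notin> F" by auto
    have e: "sigma (g \<circ> k) v = sigma g (k v) \<circ> sigma k v" using sigma_comp[OF a v] .
    show "v \<in> {v \<in> tverts. sigma k v \<notin> F} \<union> inv k ` {w \<in> tverts. sigma g w \<notin> F}"
    proof (cases "sigma k v \<in> F")
      case True
      then have "sigma g (k v) \<notin> F" using n e pg_comp[OF assms(1)] by metis
      moreover have "k v \<in> tverts" using aut_tverts[OF a(2) v] .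
      moreover have "v = inv k (k v)" using aut_inv_f[OF a(2)] by simp
      ultimately show ?thesis by blast
    next
      case False then show ?thesis using v by blast
    qed
  qed
  moreover have "finite ({v \<in> tverts. sigma k v \<notin> F} \<union> inv k ` {w \<in> tverts. sigma g w \<notin> F})"
    using fg by simp
  ultimately have "finite {v \<in> tverts. sigma (g \<circ> k) v \<notin> F}" using finite_subset by blast
  then show ?thesis using aut_comp[OF a] by (simp add: G_def)
qed

lemma G_inv: fixes g :: "'a::finite list \<Rightarrow> 'a list"
  assumes "perm_group F" "g \<in> G F" shows "inv g \<in> G F"
proof -
  have a: "g \<in> tAut" using assms G_aut by blast
  have fg: "finite {v \<in> tverts. sigma g v \<notin> F}" using assms(2) by (simp add: G_def)
  have "{v \<in> tverts. sigma (inv g) v \<notin> F} \<subseteq> g ` {w \<in> tverts. sigma g w \<notin> F}"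
  proof
    fix v assume "v \<in> {v \<in> tverts. sigma (inv g) v \<notin> F}"
    then have v: "v \<in> tverts" and n: "sigma (inv g) v \<notin> F" by auto
    have e: "sigma (inv g) v = inv (sigma g (inv g v))" using sigma_inv[OF a v] .
    have "sigma g (inv g v) \<notin> F" using n e pg_inv[OF assms(1)] by metis
    moreover have "inv g v \<in> tverts" using aut_inv_tverts[OF a v] .
    moreover have "v = g (inv g v)" using aut_f_inv[OF a] by simp
    ultimately show "v \<in> g ` {w \<in> tverts. sigma g w \<notin> F}" by blast
  qed
  then have "finite {v \<in> tverts. sigma (inv g) v \<notin> F}" using fg finite_subset by blast
  then show ?thesis using aut_inv[OF a] by (simp add: G_def)
qed

lemma G2_comp: "perm_group F \<Longrightarrow> perm_group F' \<Longrightarrow> g \<in> G2 F F' \<Longrightarrow> k \<in> G2 F F' \<Longrightarrow> g \<circ> k \<in> G2 F F'"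
  using G_comp[of F g k] U_comp[of F' g k] unfolding G2_def by blast

lemma G2_inv: fixes g :: "'a::finite list \<Rightarrow> 'a list"
  shows "perm_group F \<Longrightarrow> perm_group F' \<Longrightarrow> g \<in> G2 F F' \<Longrightarrow> inv g \<in> G2 F F'"
  using G_inv[of F g] U_inv[of F' g] unfolding G2_def by blast

lemma G2_id: "perm_group F \<Longrightarrow> perm_group F' \<Longrightarrow> id \<in> G2 F F'"
  using id_G[of F] id_U[of F'] unfolding G2_def by blast

lemma UH_G2: "F \<subseteq> F' \<Longrightarrow> U F \<subseteq> G2 F F'"
  using U_G[of F] U_mono[of F F'] unfolding G2_def by blast

lemma G2_mono: "F \<subseteq> H \<Longrightarrow> F' \<subseteq> H' \<Longrightarrow> G2 F F' \<subseteq> G2 H H'"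
  using G_mono[of F H] U_mono[of F' H'] unfolding G2_def by blast

lemma G2_aut: "g \<in> G2 F F' \<Longrightarrow> g \<in> tAut"
  by (simp add: G2_def G_def)




lemma fixU_U: "fixU H S \<subseteq> U H" by (auto simp: fixU_def)
lemma fixU_anti: "S \<subseteq> T \<Longrightarrow> fixU H T \<subseteq> fixU H S" by (auto simp: fixU_def)

definition Gpred :: "('a \<Rightarrow> 'a) set \<Rightarrow> ('a \<Rightarrow> 'a) set \<Rightarrow> ('a list \<Rightarrow> 'a list) set \<Rightarrow> bool" where
  "Gpred H H' W \<longleftrightarrow> W \<subseteq> G2 H H' \<and>
      (\<forall>g\<in>W. \<exists>S. finite S \<and> S \<subseteq> tverts \<and> (\<lambda>k. g \<circ> k) ` fixU H S \<subseteq> W)"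

lemma Gpred_istop: "istopology (Gpred H H')"
  unfolding istopology_def
proof (intro conjI allI impI)
  fix S T assume s: "Gpred H H' S" and t: "Gpred H H' T"
  have sS: "\<forall>g\<in>S. \<exists>A. finite A \<and> A \<subseteq> tverts \<and> (\<lambda>k. g \<circ> k) ` fixU H A \<subseteq> S"
    using s by (simp add: Gpred_def)
  have tT: "\<forall>g\<in>T. \<exists>A. finite A \<and> A \<subseteq> tverts \<and> (\<lambda>k. g \<circ> k) ` fixU H A \<subseteq> T"
    using t by (simp add: Gpred_def)
  have "S \<inter> T \<subseteq> G2 H H'" using s by (auto simp: Gpred_def)
  moreover have "\<exists>S'. finite S' \<and> S' \<subseteq> tverts \<and> (\<lambda>k. g \<circ> k) ` fixU H S' \<subseteq> S \<inter> T"
    if g: "g \<in> S \<inter> T" for g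
  proof -
    obtain A where A: "finite A" "A \<subseteq> tverts" "(\<lambda>k. g \<circ> k) ` fixU H A \<subseteq> S"
      using bspec[OF sS, of g] g by auto
    obtain B where B: "finite B" "B \<subseteq> tverts" "(\<lambda>k. g \<circ> k) ` fixU H B \<subseteq> T"
      using bspec[OF tT, of g] g by auto
    have "fixU H (A \<union> B) \<subseteq> fixU H A" "fixU H (A \<union> B) \<subseteq> fixU H B"
      using fixU_anti[of A "A \<union> B" H] fixU_anti[of B "A \<union> B" H] by auto
    then have "(\<lambda>k. g \<circ> k) ` fixU H (A \<union> B) \<subseteq> S \<inter> T" using A(3) B(3) by (meson image_mono le_inf_iff order_trans)
    moreover have "finite (A \<union> B)" "A \<union> B \<subseteq> tverts" using A B by auto
    ultimately show ?thesis by (intro exI[of _ "A \<union> B"]) simp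
  qed
  ultimately show "Gpred H H' (S \<inter> T)" unfolding Gpred_def by simp
next
  fix K assume k: "\<forall>W\<in>K. Gpred H H' W"
  have "\<Union>K \<subseteq> G2 H H'" using k by (auto simp: Gpred_def)
  moreover have "\<exists>S'. finite S' \<and> S' \<subseteq> tverts \<and> (\<lambda>k. g \<circ> k) ` fixU H S' \<subseteq> \<Union>K"
    if g: "g \<in> \<Union>K" for g
  proof -
    obtain W where W: "W \<in> K" "g \<in> W" using g by auto
    have "Gpred H H' W" using k W(1) by simp
    then have "\<forall>g\<in>W. \<exists>A. finite A \<and> A \<subseteq> tverts \<and> (\<lambda>k. g \<circ> k) ` fixU H A \<subseteq> W"
      by (simp add: Gpred_def)
    then obtain A where A: "finite A" "A \<subseteq> tverts" "(\<lambda>k. g \<circ> k) ` fixU H A \<subseteq> W"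
      using W(2) by auto
    have "W \<subseteq> \<Union>K" using W(1) by auto
    then show ?thesis using A by (intro exI[of _ A]) auto
  qed
  ultimately show "Gpred H H' (\<Union>K)" unfolding Gpred_def by simp
qed

lemma openin_Gtop: "openin (Gtop H H') W \<longleftrightarrow> Gpred H H' W"
proof -
  have "Gtop H H' = topology (Gpred H H')" unfolding Gtop_def Gpred_def by simp
  then show ?thesis using topology_inverse'[OF Gpred_istop[of H H']] by simp
qed

lemma coset_sub: assumes "perm_group H" "perm_group H'" "H \<subseteq> H'" "g \<in> G2 H H'"
  shows "(\<lambda>k. g \<circ> k) ` fixU H S \<subseteq> G2 H H'"
proof
  fix x assume "x \<in> (\<lambda>k. g \<circ> k) ` fixU H S"
  then obtain k where k: "k \<in> fixU H S" "x = g \<circ> k" by blast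
  have "k \<in> G2 H H'" using k(1) fixU_U UH_G2[OF assms(3)] by blast
  then show "x \<in> G2 H H'" using G2_comp[OF assms(1,2,4)] k(2) by simp
qed

lemma topspace_Gtop: assumes "perm_group H" "perm_group H'" "H \<subseteq> H'"
  shows "topspace (Gtop H H') = G2 H H'"
proof -
  have "Gpred H H' (G2 H H')" unfolding Gpred_def
    using coset_sub[OF assms] by blast
  then have "openin (Gtop H H') (G2 H H')" by (simp add: openin_Gtop)
  then have "G2 H H' \<subseteq> topspace (Gtop H H')" by (rule openin_subset)
  moreover have "topspace (Gtop H H') \<subseteq> G2 H H'"
  proof -
    have "Gpred H H' (topspace (Gtop H H'))" using openin_topspace[of "Gtop H H'"] by (simp only: openin_Gtop)
    then show ?thesis by (simp add: Gpred_def)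
  qed
  ultimately show ?thesis by blast
qed

lemma coset_open: assumes "perm_group H" "perm_group H'" "H \<subseteq> H'" "g \<in> G2 H H'"
  and "finite S" "S \<subseteq> tverts"
  shows "openin (Gtop H H') ((\<lambda>k. g \<circ> k) ` fixU H S)"
  unfolding openin_Gtop Gpred_def
proof (intro conjI ballI)
  show "(\<lambda>k. g \<circ> k) ` fixU H S \<subseteq> G2 H H'" using coset_sub[OF assms(1-4)] .
  fix x assume "x \<in> (\<lambda>k. g \<circ> k) ` fixU H S"
  then obtain k where k: "k \<in> fixU H S" "x = g \<circ> k" by blast
  have "(\<lambda>k'. x \<circ> k') ` fixU H S \<subseteq> (\<lambda>k. g \<circ> k) ` fixU H S"
  proof
    fix y assume "y \<in> (\<lambda>k'. x \<circ> k') ` fixU H S"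
    then obtain k' where k': "k' \<in> fixU H S" "y = x \<circ> k'" by blast
    have "k \<circ> k' \<in> U H" using U_comp[OF assms(1)] k(1) k'(1) fixU_U by blast
    moreover have "\<forall>s\<in>S. (k \<circ> k') s = s" using k(1) k'(1) by (simp add: fixU_def)
    ultimately have "k \<circ> k' \<in> fixU H S" by (simp add: fixU_def)
    moreover have "y = g \<circ> (k \<circ> k')" using k(2) k'(2) by (simp add: o_assoc)
    ultimately show "y \<in> (\<lambda>k. g \<circ> k) ` fixU H S" by blast
  qed
  then show "\<exists>S'. finite S' \<and> S' \<subseteq> tverts \<and> (\<lambda>k. x \<circ> k) ` fixU H S' \<subseteq> (\<lambda>k. g \<circ> k) ` fixU H S"
    using assms(5,6) by blast
qed




lemma G2_eq: assumes "F \<subseteq> H" "F' \<subseteq> H'" "H \<inter> F' = F"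
  shows "G2 F F' = G2 H H' \<inter> U F'"
proof
  show "G2 F F' \<subseteq> G2 H H' \<inter> U F'" using G2_mono[OF assms(1,2)] by (auto simp: G2_def)
  show "G2 H H' \<inter> U F' \<subseteq> G2 F F'"
  proof
    fix g assume g: "g \<in> G2 H H' \<inter> U F'"
    then have fin: "finite {v \<in> tverts. sigma g v \<notin> H}" and gu: "g \<in> U F'" and ga: "g \<in> tAut"
      by (auto simp: G2_def G_def)
    have "{v \<in> tverts. sigma g v \<notin> F} \<subseteq> {v \<in> tverts. sigma g v \<notin> H}"
    proof
      fix v assume v: "v \<in> {v \<in> tverts. sigma g v \<notin> F}"
      then have "sigma g v \<in> F'" using U_sig[OF gu] by auto
      then show "v \<in> {v \<in> tverts. sigma g v \<notin> H}" using v assms(3) by auto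
    qed
    then have "finite {v \<in> tverts. sigma g v \<notin> F}" using fin finite_subset by blast
    then show "g \<in> G2 F F'" using ga gu by (simp add: G2_def G_def)
  qed
qed

lemma tverts_Nil[simp]: "[] \<in> tverts" by (simp add: tverts_def)
lemma tverts_single[simp]: "[a] \<in> tverts" by (simp add: tverts_def)

lemma sigma_fix:
  assumes "k v = v" "\<And>a. k (tnb v a) = tnb v a"
  shows "sigma (g \<circ> k) v = sigma g v"
  using assms by (simp add: sigma_def)

lemma finite_nbhd: fixes v :: "'a::finite list" shows "finite (insert v (range (tnb v)))"
  by simp

lemma nbhd_tverts: "v \<in> tverts \<Longrightarrow> insert v (range (tnb v)) \<subseteq> tverts"
  using tnb_tverts by auto

lemma closed_part:
  fixes F F' H H' :: "('a::finite \<Rightarrow> 'a) set"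
  assumes pg: "perm_group H" "perm_group H'" "H \<subseteq> H'"
    and "F \<subseteq> H" "F' \<subseteq> H'" "H \<inter> F' = F"
  shows "closedin (Gtop H H') (G2 F F')"
proof -
  have ts: "topspace (Gtop H H') = G2 H H'" using topspace_Gtop[OF pg] .
  have eq: "G2 F F' = G2 H H' \<inter> U F'" using G2_eq assms(4-6) .
  have "openin (Gtop H H') (G2 H H' - G2 F F')"
  proof (subst openin_subopen, intro ballI)
    fix g assume g: "g \<in> G2 H H' - G2 F F'"
    then have gG: "g \<in> G2 H H'" and "g \<notin> U F'" using eq by auto
    then obtain v where v: "v \<in> tverts" "sigma g v \<notin> F'"
      using G2_aut[OF gG] by (auto simp: U_def)
    define S where "S = insert v (range (tnb v))"
    have S: "finite S" "S \<subseteq> tverts" unfolding S_def using v(1) nbhd_tverts by auto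
    let ?T = "(\<lambda>k. g \<circ> k) ` fixU H S"
    have "openin (Gtop H H') ?T" using coset_open[OF pg gG S] .
    moreover have "g \<in> ?T"
    proof -
      have "id \<in> fixU H S" using id_U[OF pg(1)] by (simp add: fixU_def)
      then show ?thesis by (metis comp_id image_eqI)
    qed
    moreover have "?T \<subseteq> G2 H H' - G2 F F'"
    proof
      fix x assume "x \<in> ?T"
      then obtain k where k: "k \<in> fixU H S" "x = g \<circ> k" by blast
      have "k v = v" "\<And>a. k (tnb v a) = tnb v a" using k(1) unfolding fixU_def S_def by auto
      then have "sigma x v = sigma g v" using k(2) sigma_fix by metis
      then have "x \<notin> U F'" using v U_sig[of x F' v] by metis
      moreover have "x \<in> G2 H H'" using coset_sub[OF pg gG] \<open>x \<in> ?T\<close> by blast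
      ultimately show "x \<in> G2 H H' - G2 F F'" using eq by blast
    qed
    ultimately show "\<exists>T. openin (Gtop H H') T \<and> g \<in> T \<and> T \<subseteq> G2 H H' - G2 F F'" by blast
  qed
  moreover have "G2 F F' \<subseteq> G2 H H'" using eq by blast
  ultimately show ?thesis unfolding closedin_def ts by simp
qed

lemma free_trivial:
  assumes pg: "perm_group F" and fr: "acts_freely F" and kU: "k \<in> U F"
    and k0: "k [] = []" and k1: "k [a] = [a]"
  shows "k = id"
proof -
  have ka: "k \<in> tAut" using U_aut[OF kU] .
  have free: "\<And>f x. f \<in> F \<Longrightarrow> f x = x \<Longrightarrow> f = id" using fr unfolding acts_freely_def by blast
  have "k w = w \<and> sigma k w = id" if "w \<in> tverts" for w
    using that
  proof (induction w rule: rev_induct)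
    case Nil
    have "tnb [] a = [a]" by (simp add: tnb_def)
    then have "sigma k [] a = a" using k0 k1 by (simp add: sigma_def tcol_def)
    then show ?case using free U_sig[OF kU tverts_Nil] k0 by blast
  next
    case (snoc b w)
    have w: "w \<in> tverts" and nl: "w = [] \<or> last w \<noteq> b" using snoc.prems
      by (cases w rule: rev_cases; auto simp: tverts_def successively_append_iff)+
    have IH: "k w = w" "sigma k w = id" using snoc.IH w by auto
    have t: "tnb w b = w @ [b]" using nl by (auto simp: tnb_def)
    have kwb: "k (w @ [b]) = w @ [b]" using aut_tnb[OF ka w, of b] IH t by simp
    have "tnb (w @ [b]) b = w" by (simp add: tnb_def)
    then have "sigma k (w @ [b]) b = b" using kwb w IH(1) by (simp add: sigma_def tcol_def)
    then show ?case using free U_sig[OF kU snoc.prems] kwb by blast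
  qed
  then show ?thesis using aut_out[OF ka] by (metis eq_id_iff)
qed


lemma UU_int: "g \<in> U H \<Longrightarrow> g \<in> U F' \<Longrightarrow> g \<in> U (H \<inter> F')"
  by (simp add: U_def)

lemma discrete_part:
  fixes F F' H H' :: "('a::finite \<Rightarrow> 'a) set"
  assumes pg: "perm_group H" "perm_group H'" "H \<subseteq> H'"
    and pf: "perm_group F" "perm_group F'"
    and "F \<subseteq> H" "F' \<subseteq> H'" "H \<inter> F' = F" and fr: "acts_freely F"
  shows "discrete_in (Gtop H H') (G2 F F')"
proof -
  have ts: "topspace (Gtop H H') = G2 H H'" using topspace_Gtop[OF pg] .
  have sub: "G2 F F' \<subseteq> G2 H H'" using G2_mono assms(6,7) .
  have "openin (subtopology (Gtop H H') (G2 F F')) {\<gamma>}" if g: "\<gamma> \<in> G2 F F'" for \<gamma>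
  proof -
    define S :: "'a list set" where "S = {[], [undefined]}"
    have S: "finite S" "S \<subseteq> tverts" unfolding S_def by auto
    let ?T = "(\<lambda>k. \<gamma> \<circ> k) ` fixU H S"
    have gG: "\<gamma> \<in> G2 H H'" using g sub by blast
    have "openin (Gtop H H') ?T" using coset_open[OF pg gG S] .
    moreover have "{\<gamma>} = ?T \<inter> G2 F F'"
    proof
      have "id \<in> fixU H S" using id_U[OF pg(1)] by (simp add: fixU_def)
      then have "\<gamma> \<in> ?T" by (metis comp_id image_eqI)
      then show "{\<gamma>} \<subseteq> ?T \<inter> G2 F F'" using g by blast
      show "?T \<inter> G2 F F' \<subseteq> {\<gamma>}"
      proof
        fix x assume x: "x \<in> ?T \<inter> G2 F F'"
        then obtain k where k: "k \<in> fixU H S" "x = \<gamma> \<circ> k" by blast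
        have ga: "\<gamma> \<in> tAut" using G2_aut[OF g] .
        have "k = inv \<gamma> \<circ> x" using k(2) aut_inv_comp[OF ga] by (simp add: o_assoc)
        moreover have "inv \<gamma> \<circ> x \<in> G2 F F'" using G2_comp[OF pf G2_inv[OF pf g]] x by blast
        ultimately have "k \<in> U F'" by (simp add: G2_def)
        moreover have "k \<in> U H" using k(1) fixU_U by blast
        ultimately have "k \<in> U F" using UU_int assms(8) by metis
        moreover have "k [] = []" "k [undefined] = [undefined]" using k(1) by (auto simp: fixU_def S_def)
        ultimately have "k = id" using free_trivial[OF pf(1) fr] by blast
        then show "x \<in> {\<gamma>}" using k(2) by simp
      qed
    qed
    ultimately show ?thesis unfolding openin_subtopology by blast
  qed
  moreover have "topspace (subtopology (Gtop H H') (G2 F F')) = G2 F F'"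
    using ts sub by auto
  ultimately show ?thesis unfolding discrete_in_def
    using discrete_topology_unique[of "G2 F F'" "subtopology (Gtop H H') (G2 F F')"] by metis
qed




primrec caux :: "('a list \<Rightarrow> 'a \<Rightarrow> 'a \<Rightarrow> ('a \<Rightarrow> 'a)) \<Rightarrow> ('a \<Rightarrow> 'a) \<Rightarrow> 'a list \<Rightarrow> 'a list \<times> ('a \<Rightarrow> 'a)" where
  "caux c p0 [] = ([], p0)"
| "caux c p0 (a # ws) = (tnb (fst (caux c p0 ws)) (snd (caux c p0 ws) a),
                         c (rev (a # ws)) a (snd (caux c p0 ws) a))"

definition img where "img c p0 w = fst (caux c p0 (rev w))"
definition loc where "loc c p0 w = snd (caux c p0 (rev w))"
definition cgam where "cgam c p0 = (\<lambda>x. if x \<in> tverts then img c p0 x else x)"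

lemma img_Nil[simp]: "img c p0 [] = []" by (simp add: img_def)
lemma loc_Nil[simp]: "loc c p0 [] = p0" by (simp add: loc_def)
lemma img_snoc[simp]: "img c p0 (w @ [a]) = tnb (img c p0 w) (loc c p0 w a)"
  by (simp add: img_def loc_def)
lemma loc_snoc[simp]: "loc c p0 (w @ [a]) = c (w @ [a]) a (loc c p0 w a)"
  by (simp add: img_def loc_def)

lemma tverts_snoc: "w @ [a] \<in> tverts \<longleftrightarrow> w \<in> tverts \<and> (w = [] \<or> last w \<noteq> a)"
  by (cases w rule: rev_cases) (auto simp: tverts_def successively_append_iff)

lemma tverts_snocD1: "w @ [a] \<in> tverts \<Longrightarrow> w \<in> tverts"
  by (simp add: tverts_snoc)
lemma tverts_snocD2: "w @ [a] \<in> tverts \<Longrightarrow> w = [] \<or> last w \<noteq> a"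
  by (simp add: tverts_snoc)
lemma tverts_snocI: "w \<in> tverts \<Longrightarrow> w = [] \<or> last w \<noteq> a \<Longrightarrow> w @ [a] \<in> tverts"
  by (simp add: tverts_snoc)

context
  fixes c :: "'a::finite list \<Rightarrow> 'a \<Rightarrow> 'a \<Rightarrow> ('a \<Rightarrow> 'a)" and p0 :: "'a \<Rightarrow> 'a" and R :: "('a \<Rightarrow> 'a) set"
  assumes Rbij: "\<And>p. p \<in> R \<Longrightarrow> bij p"
    and p0R: "p0 \<in> R"
    and cR: "\<And>w a p. p \<in> R \<Longrightarrow> c w a (p a) \<in> R"
    and ca: "\<And>w a p. p \<in> R \<Longrightarrow> c w a (p a) a = p a"
begin

lemma loc_R: "loc c p0 w \<in> R"
proof (induction w rule: rev_induct)
  case Nil then show ?case using p0R by simp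
next
  case (snoc a w) then show ?case using cR by simp
qed

lemma loc_inj: "loc c p0 w a = loc c p0 w b \<Longrightarrow> a = b"
  using Rbij[OF loc_R] by (metis bij_def injD)

lemma img_props: "w \<in> tverts \<Longrightarrow> img c p0 w \<in> tverts \<and> length (img c p0 w) = length w \<and>
    (w \<noteq> [] \<longrightarrow> last (img c p0 w) = loc c p0 w (last w))"
proof (induction w rule: rev_induct)
  case Nil then show ?case by simp
next
  case (snoc a w)
  have w: "w \<in> tverts" and nl: "w = [] \<or> last w \<noteq> a" using tverts_snocD1[OF snoc.prems] tverts_snocD2[OF snoc.prems] by auto
  have IH: "img c p0 w \<in> tverts" "length (img c p0 w) = length w"
    "w \<noteq> [] \<longrightarrow> last (img c p0 w) = loc c p0 w (last w)" using snoc.IH w by auto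
  have nn: "img c p0 w = [] \<or> last (img c p0 w) \<noteq> loc c p0 w a"
  proof (cases "w = []")
    case True then show ?thesis using IH(2) by simp
  next
    case False then show ?thesis using IH(3) nl loc_inj by metis
  qed
  then have e: "img c p0 (w @ [a]) = img c p0 w @ [loc c p0 w a]" by (auto simp: tnb_def)
  have "img c p0 w @ [loc c p0 w a] \<in> tverts" using tverts_snocI[OF IH(1) nn] .
  moreover have "loc c p0 (w @ [a]) a = loc c p0 w a" using ca[OF loc_R] by simp
  ultimately show ?case using e IH(2) by simp
qed

lemma img_snoc': "w @ [a] \<in> tverts \<Longrightarrow> img c p0 (w @ [a]) = img c p0 w @ [loc c p0 w a]"
proof -
  assume h: "w @ [a] \<in> tverts"
  have w: "w \<in> tverts" and nl: "w = [] \<or> last w \<noteq> a" using tverts_snocD1[OF h] tverts_snocD2[OF h] by auto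
  have nn: "img c p0 w = [] \<or> last (img c p0 w) \<noteq> loc c p0 w a"
  proof (cases "w = []")
    case True then show ?thesis by simp
  next
    case False then show ?thesis using img_props[OF w] nl loc_inj by metis
  qed
  then show ?thesis by (auto simp: tnb_def)
qed

lemma img_inj: "u \<in> tverts \<Longrightarrow> w \<in> tverts \<Longrightarrow> img c p0 u = img c p0 w \<Longrightarrow> u = w"
proof (induction u arbitrary: w rule: rev_induct)
  case Nil
  then show ?case using img_props[OF Nil(2)] by simp
next
  case (snoc a u)
  have lw: "length w = Suc (length u)" using img_props[OF snoc(2)] img_props[OF snoc(3)] snoc(4) by simp
  then obtain w' b where wb: "w = w' @ [b]" by (cases w rule: rev_cases) auto
  have u: "u \<in> tverts" using tverts_snocD1[OF snoc(2)] .
  have "w' @ [b] \<in> tverts" using snoc(3) wb by simp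
  then have w': "w' \<in> tverts" by (rule tverts_snocD1)
  have e1: "img c p0 (u @ [a]) = img c p0 u @ [loc c p0 u a]" by (rule img_snoc'[OF snoc(2)])
  have "w' @ [b] \<in> tverts" using snoc(3) wb by simp
  then have e2: "img c p0 (w' @ [b]) = img c p0 w' @ [loc c p0 w' b]" by (rule img_snoc')
  have "img c p0 u @ [loc c p0 u a] = img c p0 w' @ [loc c p0 w' b]"
    using snoc(4) e1 e2 wb by metis
  then have "img c p0 u = img c p0 w'" "loc c p0 u a = loc c p0 w' b" by auto
  then have "u = w'" using snoc.IH u w' by blast
  then have "a = b" using \<open>loc c p0 u a = loc c p0 w' b\<close> loc_inj by blast
  then show ?case using wb \<open>u = w'\<close> by simp
qed

lemma img_surj: "x \<in> tverts \<Longrightarrow> \<exists>w\<in>tverts. img c p0 w = x"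
proof (induction x rule: rev_induct)
  case Nil then show ?case by (intro bexI[of _ "[]"]) auto
next
  case (snoc e y)
  have y: "y \<in> tverts" and nl: "y = [] \<or> last y \<noteq> e" using tverts_snocD1[OF snoc.prems] tverts_snocD2[OF snoc.prems] by auto
  obtain w where w: "w \<in> tverts" "img c p0 w = y" using snoc.IH y by blast
  define a where "a = inv (loc c p0 w) e"
  have la: "loc c p0 w a = e" unfolding a_def using surj_f_inv_f[OF bij_is_surj[OF Rbij[OF loc_R]]] by simp
  have "w = [] \<or> last w \<noteq> a"
  proof (cases "w = []")
    case False
    then have "y \<noteq> []" "last y = loc c p0 w (last w)" using img_props[OF w(1)] w(2) by auto
    then show ?thesis using nl la by metis
  qed simp
  then have wa: "w @ [a] \<in> tverts" by (rule tverts_snocI[OF w(1)])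
  then have "img c p0 (w @ [a]) = y @ [e]" using img_snoc'[OF wa] w(2) la by simp
  then show ?case using wa by blast
qed

lemma cgam_tnb: assumes w: "w \<in> tverts" shows "cgam c p0 (tnb w b) = tnb (cgam c p0 w) (loc c p0 w b)"
proof (cases "w \<noteq> [] \<and> last w = b")
  case True
  then obtain u where u: "w = u @ [b]" by (cases w rule: rev_cases) auto
  have "u @ [b] \<in> tverts" using w u by simp
  then have ut: "u \<in> tverts" by (rule tverts_snocD1)
  have t: "tnb w b = u" using u by (simp add: tnb_def)
  have l: "loc c p0 w b = loc c p0 u b" using u ca[OF loc_R] by simp
  have "img c p0 w = tnb (img c p0 u) (loc c p0 u b)" using u by simp
  then have "tnb (img c p0 w) (loc c p0 w b) = img c p0 u"
    using l tnb_tnb[OF conjunct1[OF img_props[OF ut]]] by simp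
  then show ?thesis using t w ut by (simp add: cgam_def)
next
  case False
  then have t: "tnb w b = w @ [b]" by (auto simp: tnb_def)
  have "w = [] \<or> last w \<noteq> b" using False by auto
  then have "w @ [b] \<in> tverts" by (rule tverts_snocI[OF w])
  then show ?thesis using t w by (simp add: cgam_def)
qed

lemma cgam_tverts: "x \<in> tverts \<Longrightarrow> cgam c p0 x \<in> tverts"
  using img_props by (simp add: cgam_def)

lemma cgam_aut: "cgam c p0 \<in> tAut"
proof -
  let ?g = "cgam c p0"
  have inj: "inj ?g"
  proof
    fix x y assume h: "?g x = ?g y"
    show "x = y"
    proof (cases "x \<in> tverts"; cases "y \<in> tverts")
      assume "x \<in> tverts" "y \<in> tverts" then show ?thesis using h img_inj by (simp add: cgam_def)
    next
      assume "x \<in> tverts" "y \<notin> tverts" then show ?thesis using h cgam_tverts by (metis cgam_def)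
    next
      assume "x \<notin> tverts" "y \<in> tverts" then show ?thesis using h cgam_tverts by (metis cgam_def)
    next
      assume "x \<notin> tverts" "y \<notin> tverts" then show ?thesis using h by (simp add: cgam_def)
    qed
  qed
  have im: "?g ` tverts = tverts"
  proof
    show "?g ` tverts \<subseteq> tverts" using cgam_tverts by blast
    show "tverts \<subseteq> ?g ` tverts"
    proof
      fix x :: "'a list" assume "x \<in> tverts"
      then obtain w where "w \<in> tverts" "img c p0 w = x" using img_surj by blast
      then show "x \<in> ?g ` tverts" by (metis cgam_def image_eqI)
    qed
  qed
  have surj: "surj ?g"
  proof -
    have "y \<in> range ?g" for y
    proof (cases "y \<in> tverts")
      case True then show ?thesis using im by blast
    next
      case False then have "?g y = y" by (simp add: cgam_def)
      then show ?thesis by (metis rangeI)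
    qed
    then show ?thesis by blast
  qed
  have out: "\<forall>x. x \<notin> tverts \<longrightarrow> ?g x = x" by (simp add: cgam_def)
  have adj: "\<forall>u\<in>tverts. \<forall>w\<in>tverts. tadj (?g u) (?g w) \<longleftrightarrow> tadj u w"
  proof (intro ballI)
    fix u w :: "'a list" assume u: "u \<in> tverts" and w: "w \<in> tverts"
    show "tadj (?g u) (?g w) \<longleftrightarrow> tadj u w"
    proof
      assume "tadj u w"
      then obtain a where "w = tnb u a" unfolding tadj_iff by auto
      then have "?g w = tnb (?g u) (loc c p0 u a)" using cgam_tnb u by simp
      moreover have "?g u \<in> tverts" "?g w \<in> tverts" using cgam_tverts[OF u] cgam_tverts[OF w] by auto
      ultimately show "tadj (?g u) (?g w)" unfolding tadj_iff by auto
    next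
      assume "tadj (?g u) (?g w)"
      then obtain e where e: "?g w = tnb (?g u) e" by (auto simp: tadj_iff)
      define a where "a = inv (loc c p0 u) e"
      have la: "loc c p0 u a = e" unfolding a_def using surj_f_inv_f[OF bij_is_surj[OF Rbij[OF loc_R]]] by simp
      have "?g w = ?g (tnb u a)" using e la cgam_tnb[OF u] by simp
      then have "w = tnb u a" using inj by (simp add: inj_eq)
      then show "tadj u w" using u w by (auto simp: tadj_iff)
    qed
  qed
  show ?thesis unfolding tAut_def using inj surj im out adj by (simp add: bij_def)
qed

lemma cgam_sigma: "w \<in> tverts \<Longrightarrow> sigma (cgam c p0) w = loc c p0 w"
proof
  fix b assume w: "w \<in> tverts"
  show "sigma (cgam c p0) w b = loc c p0 w b" using cgam_tnb[OF w] by (simp add: sigma_def)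
qed

lemma cgam_root: "cgam c p0 [] = []" by (simp add: cgam_def)

end




definition tr :: "'a \<Rightarrow> 'a list \<Rightarrow> 'a list" where
  "tr x w = (if w \<in> tverts then (if w \<noteq> [] \<and> hd w = x then tl w else x # w) else w)"

lemma tverts_Cons: "y # w \<in> tverts \<longleftrightarrow> w \<in> tverts \<and> (w = [] \<or> hd w \<noteq> y)"
  by (cases w) (auto simp: tverts_def)

lemma tr_tverts: "w \<in> tverts \<Longrightarrow> tr x w \<in> tverts"
  by (cases w) (auto simp: tr_def tverts_Cons)

lemma tr_tr: "tr x (tr x w) = w"
proof (cases "w \<in> tverts")
  case True
  show ?thesis
  proof (cases "w \<noteq> [] \<and> hd w = x")
    case c: True
    then have "tl w \<in> tverts" using True by (cases w) (auto simp: tverts_Cons)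
    moreover have "tl w = [] \<or> hd (tl w) \<noteq> x" using True c by (cases w) (auto simp: tverts_Cons)
    ultimately show ?thesis using True c by (cases w) (auto simp: tr_def)
  next
    case c: False
    then have "x # w \<in> tverts" using True by (auto simp: tverts_Cons)
    then show ?thesis using True c by (auto simp: tr_def)
  qed
next
  case False then show ?thesis by (simp add: tr_def)
qed

lemma tr_tnb: assumes w: "w \<in> tverts" shows "tr x (tnb w b) = tnb (tr x w) b"
proof -
  have t1: "tnb w b \<in> tverts" using tnb_tverts[OF w] .
  have t2: "tr x w \<in> tverts" using tr_tverts[OF w] .
  show ?thesis
  proof (cases w)
    case Nil then show ?thesis by (auto simp: tr_def tnb_def)
  next
    case (Cons y ys)
    have ys: "ys \<in> tverts" "ys = [] \<or> hd ys \<noteq> y" using w Cons by (auto simp: tverts_Cons)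
    show ?thesis
    proof (cases "y = x")
      case True
      show ?thesis
      proof (cases "last w = b")
        case lb: True
        show ?thesis
        proof (cases "ys = []")
          case True then show ?thesis using Cons lb \<open>y = x\<close> w by (auto simp: tr_def tnb_def)
        next
          case False
          have "butlast w = x # butlast ys" using Cons False \<open>y = x\<close> by simp
          moreover have "butlast ys \<in> tverts" using tnb_tverts[OF ys(1), of "last ys"] False
            by (simp add: tnb_def)
          ultimately show ?thesis using Cons lb \<open>y = x\<close> False t1 t2 ys w
            by (auto simp: tr_def tnb_def)
        qed
      next
        case lb: False
        then show ?thesis using Cons \<open>y = x\<close> t1 t2 ys w
          by (cases "ys = []") (auto simp: tr_def tnb_def)
      qed
    next
      case False
      have xw: "x # w \<in> tverts" using w Cons False by (auto simp: tverts_Cons)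
      show ?thesis
      proof (cases "last w = b")
        case lb: True
        then show ?thesis using Cons False t1 t2 xw w
          by (cases "ys = []") (auto simp: tr_def tnb_def)
      next
        case lb: False
        then show ?thesis using Cons False t1 t2 xw w
          by (cases "ys = []") (auto simp: tr_def tnb_def)
      qed
    qed
  qed
qed


lemma tr_aut: "tr x \<in> tAut"
proof -
  have inj: "inj (tr x)"
  proof
    fix a b assume "tr x a = tr x b"
    then have "tr x (tr x a) = tr x (tr x b)" by simp
    then show "a = b" by (simp add: tr_tr)
  qed
  have surj: "surj (tr x)"
  proof -
    have "y \<in> range (tr x)" for y
    proof -
      have "y = tr x (tr x y)" by (simp add: tr_tr)
      then show ?thesis by blast
    qed
    then show ?thesis by blast
  qed
  have im: "tr x ` tverts = tverts"
  proof
    show "tr x ` tverts \<subseteq> tverts"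
    proof
      fix y assume "y \<in> tr x ` tverts"
      then obtain w where "w \<in> tverts" "y = tr x w" by auto
      then show "y \<in> tverts" using tr_tverts by simp
    qed
    show "tverts \<subseteq> tr x ` tverts"
    proof
      fix w :: "'a list" assume w: "w \<in> tverts"
      have "w = tr x (tr x w)" by (simp add: tr_tr)
      then show "w \<in> tr x ` tverts" using tr_tverts[OF w] by blast
    qed
  qed
  have out: "\<forall>w. w \<notin> tverts \<longrightarrow> tr x w = w" by (simp add: tr_def)
  have adj: "\<forall>u\<in>tverts. \<forall>w\<in>tverts. tadj (tr x u) (tr x w) \<longleftrightarrow> tadj u w"
  proof (intro ballI)
    fix u w :: "'a list" assume u: "u \<in> tverts" and w: "w \<in> tverts"
    have tu: "tr x u \<in> tverts" and tw: "tr x w \<in> tverts" using tr_tverts[OF u] tr_tverts[OF w] by auto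
    show "tadj (tr x u) (tr x w) \<longleftrightarrow> tadj u w"
    proof
      assume "tadj u w"
      then obtain a where "w = tnb u a" unfolding tadj_iff by auto
      then have "tr x w = tnb (tr x u) a" using tr_tnb[OF u] by simp
      then show "tadj (tr x u) (tr x w)" using tu tw unfolding tadj_iff by auto
    next
      assume "tadj (tr x u) (tr x w)"
      then obtain a where "tr x w = tnb (tr x u) a" unfolding tadj_iff by auto
      then have "tr x (tr x w) = tnb (tr x (tr x u)) a" using tr_tnb[OF tu] by simp
      then have "w = tnb u a" by (simp add: tr_tr)
      then show "tadj u w" using u w unfolding tadj_iff by auto
    qed
  qed
  show ?thesis unfolding tAut_def using inj surj im out adj by (simp add: bij_def)
qed

lemma tr_sigma: "w \<in> tverts \<Longrightarrow> sigma (tr x) w = id"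
proof
  fix b assume w: "w \<in> tverts"
  show "sigma (tr x) w b = id b" using tr_tnb[OF w] by (simp add: sigma_def)
qed

lemma tr_U: "perm_group F \<Longrightarrow> tr x \<in> U F"
  using tr_aut[of x] tr_sigma[of _ x] pg_id[of F] by (simp add: U_def)

lemma exists_trans: assumes pg: "perm_group F" shows "r \<in> tverts \<Longrightarrow> \<exists>t\<in>U F. t [] = r"
proof (induction r)
  case Nil
  have "id [] = ([] :: 'a list)" by simp
  then show ?case using id_U[OF pg] by (intro bexI[of _ id])
next
  case (Cons x r)
  have r: "r \<in> tverts" "r = [] \<or> hd r \<noteq> x" using Cons.prems by (auto simp: tverts_Cons)
  obtain t where t: "t \<in> U F" "t [] = r" using Cons.IH r(1) by blast
  have "tr x r = x # r" using r by (auto simp: tr_def)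
  then have "(tr x \<circ> t) [] = x # r" using t(2) by simp
  moreover have "tr x \<circ> t \<in> U F" using U_comp[OF pg tr_U[OF pg] t(1)] .
  ultimately show ?case by blast
qed


lemma decomp:
  fixes F F' H H' :: "('a::finite \<Rightarrow> 'a) set"
  assumes pF: "perm_group F" and pF': "perm_group F'" and pH: "perm_group H" and pH': "perm_group H'"
    and FF': "F \<subseteq> F'" and F'h: "F' \<subseteq> hat F" and FH: "F \<subseteq> H" and F'H': "F' \<subseteq> H'"
    and HH': "H \<subseteq> H'" and HF': "H \<inter> F' = F" and H'eq: "H' = setprod H F'"
    and g: "g \<in> G2 H H'"
  shows "\<exists>k\<in>fixU H {[]}. \<exists>\<gamma>\<in>G2 F F'. g = k \<circ> \<gamma>"
proof -
  have ga: "g \<in> tAut" using G2_aut[OF g] .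
  define r where "r = inv g []"
  have r: "r \<in> tverts" unfolding r_def using aut_inv_tverts[OF ga tverts_Nil] .
  obtain t where t: "t \<in> U F" "t [] = r" using exists_trans[OF pF r] by blast
  have ta: "t \<in> tAut" using U_aut[OF t(1)] .
  define g' where "g' = g \<circ> t"
  have g'a: "g' \<in> tAut" unfolding g'_def using aut_comp[OF ga ta] .
  have g'0: "g' [] = []" unfolding g'_def using t(2) r_def aut_f_inv[OF ga] by simp
  have tH: "t \<in> G2 H H'" using t(1) U_mono[OF FH] UH_G2[OF HH'] by blast
  have g'G2: "g' \<in> G2 H H'" unfolding g'_def using G2_comp[OF pH pH' g tH] .
  have g'fin: "finite {v \<in> tverts. sigma g' v \<notin> H}" using g'G2 by (simp add: G2_def G_def)
  have g'H': "\<And>v. v \<in> tverts \<Longrightarrow> sigma g' v \<in> H'" using U_sig[of g' H'] g'G2 unfolding G2_def by blast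
  define P where "P v f \<longleftrightarrow> f \<in> F' \<and> (\<exists>h\<in>H. sigma g' v = h \<circ> f) \<and> (sigma g' v \<in> H \<longrightarrow> f = id)" for v f
  have exf: "\<exists>f. P v f" if v: "v \<in> tverts" for v
  proof (cases "sigma g' v \<in> H")
    case True
    then show ?thesis unfolding P_def using pg_id[OF pF'] by (intro exI[of _ id]) auto
  next
    case False
    have "sigma g' v \<in> setprod H F'" using g'H'[OF v] H'eq by simp
    then obtain h f where "h \<in> H" "f \<in> F'" "sigma g' v = h \<circ> f" unfolding setprod_def by blast
    then show ?thesis unfolding P_def using False by (intro exI[of _ f]) auto
  qed
  define f where "f v = (if v \<in> tverts then (SOME f. P v f) else id)" for v
  have fP: "P v (f v)" if "v \<in> tverts" for v
    using someI_ex[OF exf[OF that]] that by (simp add: f_def)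
  have fF': "f v \<in> F'" for v
    using fP[of v] pg_id[OF pF'] by (cases "v \<in> tverts") (auto simp: P_def f_def)
  define c where "c v a b = (SOME p. (\<exists>\<phi>\<in>F. p = \<phi> \<circ> f v) \<and> p a = b)" for v a b
  have cP: "(\<exists>\<phi>\<in>F. c v a (p a) = \<phi> \<circ> f v) \<and> c v a (p a) a = p a" if p: "p \<in> F'" for v a p
  proof -
    have bf: "bij (f v)" using pg_bij[OF pF' fF'] .
    define q where "q = p \<circ> inv (f v)"
    have "q \<in> F'" unfolding q_def using pg_comp[OF pF' p pg_inv[OF pF' fF']] .
    then have "q \<in> hat F" using F'h by blast
    then obtain \<phi> where \<phi>: "\<phi> \<in> F" "q (f v a) = \<phi> (f v a)" unfolding hat_def by blast
    have "q (f v a) = p a" unfolding q_def using inv_f_f[OF bij_is_inj[OF bf]] by simp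
    then have "(\<exists>\<phi>\<in>F. \<phi> \<circ> f v = \<phi> \<circ> f v) \<and> (\<phi> \<circ> f v) a = p a" using \<phi> by auto
    then have "\<exists>p'. (\<exists>\<phi>\<in>F. p' = \<phi> \<circ> f v) \<and> p' a = p a" using \<phi>(1) by blast
    then show ?thesis unfolding c_def by (rule someI_ex)
  qed
  define p0 where "p0 = f []"
  have A1: "\<And>p. p \<in> F' \<Longrightarrow> bij p" using pg_bij[OF pF'] .
  have A2: "p0 \<in> F'" unfolding p0_def using fF' .
  have A3: "\<And>w a p. p \<in> F' \<Longrightarrow> c w a (p a) \<in> F'"
  proof -
    fix w a p assume p: "p \<in> F'"
    obtain \<phi> where "\<phi> \<in> F" "c w a (p a) = \<phi> \<circ> f w" using cP[OF p] by blast
    then show "c w a (p a) \<in> F'" using pg_comp[OF pF'] FF' fF' by auto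
  qed
  have A4: "\<And>w a p. p \<in> F' \<Longrightarrow> c w a (p a) a = p a" using cP by blast
  define \<gamma>0 where "\<gamma>0 = cgam c p0"
  have g0a: "\<gamma>0 \<in> tAut" unfolding \<gamma>0_def by (rule cgam_aut[of "F'" p0 c]) (fact A1, fact A2, fact A3, fact A4)
  have g00: "\<gamma>0 [] = []" unfolding \<gamma>0_def by (rule cgam_root[of "F'" p0 c]) (fact A1, fact A2, fact A3, fact A4)
  have g0s: "sigma \<gamma>0 w = loc c p0 w" if w: "w \<in> tverts" for w
    unfolding \<gamma>0_def by (rule cgam_sigma[of "F'" p0 c]) (fact A1, fact A2, fact A3, fact A4, fact w)
  have locR: "\<And>w. loc c p0 w \<in> F'" by (rule loc_R[of "F'" p0 c]) (fact A1, fact A2, fact A3, fact A4)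
  have locF: "\<exists>\<phi>\<in>F. loc c p0 w = \<phi> \<circ> f w" if w: "w \<in> tverts" for w
  proof (cases w rule: rev_cases)
    case Nil
    then show ?thesis using pg_id[OF pF] unfolding p0_def by (intro bexI[of _ id]) auto
  next
    case (snoc u a)
    then show ?thesis using cP[OF locR[of u], of w a] by simp
  qed
  have g0U: "\<gamma>0 \<in> U F'" using g0a g0s locR by (simp add: U_def)
  have "{w \<in> tverts. sigma \<gamma>0 w \<notin> F} \<subseteq> {v \<in> tverts. sigma g' v \<notin> H}"
  proof
    fix w assume "w \<in> {w \<in> tverts. sigma \<gamma>0 w \<notin> F}"
    then have w: "w \<in> tverts" and n: "sigma \<gamma>0 w \<notin> F" by auto
    show "w \<in> {v \<in> tverts. sigma g' v \<notin> H}"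
    proof (rule ccontr)
      assume "w \<notin> {v \<in> tverts. sigma g' v \<notin> H}"
      then have "sigma g' w \<in> H" using w by auto
      then have "f w = id" using fP[OF w] by (simp add: P_def)
      then obtain \<phi> where "\<phi> \<in> F" "loc c p0 w = \<phi>" using locF[OF w] by auto
      then show False using n g0s[OF w] by simp
    qed
  qed
  then have "finite {w \<in> tverts. sigma \<gamma>0 w \<notin> F}" using g'fin finite_subset by blast
  then have g0G: "\<gamma>0 \<in> G F" using g0a by (simp add: G_def)
  have g0G2: "\<gamma>0 \<in> G2 F F'" using g0G g0U by (simp add: G2_def)
  define k where "k = g' \<circ> inv \<gamma>0"
  have ia: "inv \<gamma>0 \<in> tAut" using aut_inv[OF g0a] .
  have ka: "k \<in> tAut" unfolding k_def using aut_comp[OF g'a ia] .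
  have i0: "inv \<gamma>0 [] = []" using aut_inv_f[OF g0a, of "[]"] g00 by simp
  have k0: "k [] = []" unfolding k_def using i0 g'0 by simp
  have kH: "sigma k u \<in> H" if u: "u \<in> tverts" for u
  proof -
    define v where "v = inv \<gamma>0 u"
    have v: "v \<in> tverts" unfolding v_def using aut_inv_tverts[OF g0a u] .
    have e1: "sigma k u = sigma g' v \<circ> sigma (inv \<gamma>0) u" unfolding k_def v_def using sigma_comp[OF g'a ia u] .
    have e2: "sigma (inv \<gamma>0) u = inv (sigma \<gamma>0 v)" unfolding v_def using sigma_inv[OF g0a u] .
    obtain \<phi> where ph: "\<phi> \<in> F" "sigma \<gamma>0 v = \<phi> \<circ> f v" using locF[OF v] g0s[OF v] by auto
    obtain h where h: "h \<in> H" "sigma g' v = h \<circ> f v" using fP[OF v] by (auto simp: P_def)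
    have bph: "bij \<phi>" using pg_bij[OF pF ph(1)] .
    have bf: "bij (f v)" using pg_bij[OF pF' fF'] .
    have "inv (sigma \<gamma>0 v) = inv (f v) \<circ> inv \<phi>" using ph(2) o_inv_distrib[OF bph bf] by simp
    then have "sigma k u = h \<circ> (f v \<circ> inv (f v)) \<circ> inv \<phi>" using e1 e2 h(2) by (simp add: o_assoc)
    also have "f v \<circ> inv (f v) = id" using bf by (meson bij_is_surj surj_iff)
    finally have "sigma k u = h \<circ> id \<circ> inv \<phi>" .
    then have "sigma k u = h \<circ> inv \<phi>" by (simp only: comp_id)
    moreover have "inv \<phi> \<in> H" using pg_inv[OF pH] ph(1) FH by blast
    ultimately show ?thesis using pg_comp[OF pH h(1)] by simp
  qed
  have kfix: "k \<in> fixU H {[]}" using ka kH k0 by (simp add: fixU_def U_def)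
  have itF: "inv t \<in> G2 F F'" using U_inv[OF pF t(1)] UH_G2[OF FF'] by blast
  have gam: "\<gamma>0 \<circ> inv t \<in> G2 F F'" using G2_comp[OF pF pF' g0G2 itF] .
  have "k \<circ> (\<gamma>0 \<circ> inv t) = g' \<circ> (inv \<gamma>0 \<circ> \<gamma>0) \<circ> inv t" unfolding k_def by (simp add: o_assoc)
  also have "\<dots> = g \<circ> (t \<circ> inv t)" unfolding g'_def using aut_inv_comp[OF g0a] by (simp add: o_assoc)
  also have "\<dots> = g" using aut_comp_inv[OF ta] by simp
  finally show ?thesis using kfix gam by metis
qed




lemma len_pres:
  fixes k :: "'a::finite list \<Rightarrow> 'a list"
  assumes ka: "k \<in> tAut" and k0: "k [] = []"
  shows "w \<in> tverts \<Longrightarrow> length (k w) = length w"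
proof (induction "length w" arbitrary: w rule: less_induct)
  case less
  show ?case
  proof (cases w rule: rev_cases)
    case Nil then show ?thesis using k0 by simp
  next
    case (snoc w1 a)
    have w1: "w1 \<in> tverts" using tverts_snocD1 less.prems snoc by simp
    have nl: "w1 = [] \<or> last w1 \<noteq> a" using tverts_snocD2 less.prems snoc by simp
    have IH1: "length (k w1) = length w1" using less.hyps[of w1] snoc w1 by simp
    have t: "tnb w1 a = w" using nl snoc by (auto simp: tnb_def)
    have e: "k w = tnb (k w1) (sigma k w1 a)" using aut_tnb[OF ka w1, of a] t by simp
    show ?thesis
    proof (cases "k w1 \<noteq> [] \<and> last (k w1) = sigma k w1 a")
      case False
      then have "k w = k w1 @ [sigma k w1 a]" using e by (auto simp: tnb_def)
      then show ?thesis using IH1 snoc by simp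
    next
      case True
      then have "w1 \<noteq> []" using IH1 by auto
      then obtain u b where ub: "w1 = u @ [b]" by (cases w1 rule: rev_cases) auto
      have u: "u \<in> tverts" using tverts_snocD1 w1 ub by simp
      have IH2: "length (k u) = length u" using less.hyps[of u] snoc ub u by simp
      have tu: "tnb w1 b = u" using ub by (simp add: tnb_def)
      have eu: "k u = tnb (k w1) (sigma k w1 b)" using aut_tnb[OF ka w1, of b] tu by simp
      have "k w1 \<noteq> [] \<and> last (k w1) = sigma k w1 b"
      proof (rule ccontr)
        assume "\<not> (k w1 \<noteq> [] \<and> last (k w1) = sigma k w1 b)"
        then have "k u = k w1 @ [sigma k w1 b]" using eu by (auto simp: tnb_def)
        then show False using IH1 IH2 ub by simp
      qed
      then have "sigma k w1 a = sigma k w1 b" using True by simp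
      then have "a = b" using sigma_inj[OF ka w1] by (simp add: inj_eq)
      then show ?thesis using nl ub by simp
    qed
  qed
qed

definition LV :: "'a list \<Rightarrow> 'a list set" where
  "LV v = {w \<in> tverts. length w = length v}"

lemma LV_finite: "finite (LV (v :: 'a::finite list))"
proof -
  have "LV v \<subseteq> {xs. set xs \<subseteq> UNIV \<and> length xs = length v}" by (auto simp: LV_def)
  moreover have "finite {xs. set xs \<subseteq> (UNIV :: 'a set) \<and> length xs = length v}"
    by (rule finite_lists_length_eq) simp
  ultimately show ?thesis using finite_subset by blast
qed

definition extv :: "('a list \<Rightarrow> 'a list) \<Rightarrow> ('a list \<Rightarrow> 'a list)" where
  "extv f = (\<lambda>x. if x \<in> tverts then f x else x)"

definition Qc :: "('a \<Rightarrow> 'a) set \<Rightarrow> ('a list \<Rightarrow> 'a list) \<Rightarrow> bool" where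
  "Qc H f \<longleftrightarrow> f [] = [] \<and> (\<forall>u\<in>tverts. \<forall>w\<in>tverts. f u = f w \<longrightarrow> u = w)
     \<and> (\<forall>u\<in>tverts. \<forall>w\<in>tverts. tadj (f u) (f w) \<longleftrightarrow> tadj u w)
     \<and> (\<forall>v\<in>tverts. (\<lambda>a. tcol (f v) (f (tnb v a))) \<in> H)"

lemma sigma_ext: assumes v: "v \<in> tverts" shows "sigma (extv f) v = (\<lambda>a. tcol (f v) (f (tnb v a)))"
proof (rule HOL.ext)
  fix a
  have "tnb v a \<in> tverts" using tnb_tverts[OF v] .
  then show "sigma (extv f) v a = tcol (f v) (f (tnb v a))" using v by (simp add: sigma_def extv_def)
qed

lemma K_Qc: assumes "extv f \<in> fixU H {[]}" shows "Qc H f"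
proof -
  have a: "extv f \<in> tAut" and s: "\<And>v. v \<in> tverts \<Longrightarrow> sigma (extv f) v \<in> H" and r: "extv f [] = []"
    using assms by (auto simp: fixU_def U_def)
  have e: "\<And>x. x \<in> tverts \<Longrightarrow> extv f x = f x" by (simp add: extv_def)
  have "f [] = []" using r e[OF tverts_Nil] by simp
  moreover have "\<forall>u\<in>tverts. \<forall>w\<in>tverts. f u = f w \<longrightarrow> u = w"
    using aut_bij[OF a] e by (metis bij_is_inj injD)
  moreover have "\<forall>u\<in>tverts. \<forall>w\<in>tverts. tadj (f u) (f w) \<longleftrightarrow> tadj u w"
    using aut_adj[OF a] e by metis
  moreover have "\<forall>v\<in>tverts. (\<lambda>a. tcol (f v) (f (tnb v a))) \<in> H"
  proof
    fix v :: "'a list" assume v: "v \<in> tverts"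
    show "(\<lambda>a. tcol (f v) (f (tnb v a))) \<in> H" using s[OF v] sigma_ext[OF v, of f] by simp
  qed
  ultimately show ?thesis by (simp add: Qc_def)
qed

lemma Qc_K: fixes f :: "'a::finite list \<Rightarrow> 'a list"
  assumes fP: "f \<in> PiE tverts LV" and q: "Qc H f" shows "extv f \<in> fixU H {[]}"
proof -
  have fL: "\<And>v. v \<in> tverts \<Longrightarrow> f v \<in> LV v" using fP by (auto simp: PiE_def Pi_def)
  have e: "\<And>x. x \<in> tverts \<Longrightarrow> extv f x = f x" by (simp add: extv_def)
  have o: "\<And>x. x \<notin> tverts \<Longrightarrow> extv f x = x" by (simp add: extv_def)
  have ft: "\<And>v. v \<in> tverts \<Longrightarrow> f v \<in> tverts" using fL by (simp add: LV_def)
  have injf: "\<And>u w. u \<in> tverts \<Longrightarrow> w \<in> tverts \<Longrightarrow> f u = f w \<Longrightarrow> u = w" using q by (simp add: Qc_def)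
  have sur: "\<exists>v\<in>tverts. f v = y" if y: "y \<in> tverts" for y
  proof -
    have sub: "LV y \<subseteq> tverts" by (auto simp: LV_def)
    have "f ` LV y \<subseteq> LV y"
    proof
      fix z assume "z \<in> f ` LV y"
      then obtain v where v: "v \<in> LV y" "z = f v" by blast
      then have "v \<in> tverts" "length v = length y" by (auto simp: LV_def)
      then show "z \<in> LV y" using fL[of v] v(2) by (simp add: LV_def)
    qed
    moreover have "inj_on f (LV y)" using injf sub by (meson inj_onI subsetD)
    ultimately have "f ` LV y = LV y" using endo_inj_surj[OF LV_finite] by blast
    moreover have "y \<in> LV y" using y by (simp add: LV_def)
    ultimately obtain v where "v \<in> LV y" "f v = y" by (metis imageE)
    then show ?thesis using sub by blast
  qed
  have inj: "inj (extv f)"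
  proof
    fix x y assume h: "extv f x = extv f y"
    show "x = y"
    proof (cases "x \<in> tverts"; cases "y \<in> tverts")
      assume "x \<in> tverts" "y \<in> tverts" then show ?thesis using h e injf by metis
    next
      assume "x \<in> tverts" "y \<notin> tverts" then show ?thesis using h e o ft by metis
    next
      assume "x \<notin> tverts" "y \<in> tverts" then show ?thesis using h e o ft by metis
    next
      assume "x \<notin> tverts" "y \<notin> tverts" then show ?thesis using h o by metis
    qed
  qed
  have im: "extv f ` tverts = tverts"
  proof
    show "extv f ` tverts \<subseteq> tverts"
    proof
      fix z assume "z \<in> extv f ` tverts"
      then obtain v where "v \<in> tverts" "z = extv f v" by blast
      then show "z \<in> tverts" using e ft by simp
    qed
    show "tverts \<subseteq> extv f ` tverts"
    proof
      fix y :: "'a list" assume "y \<in> tverts"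
      then obtain v where "v \<in> tverts" "f v = y" using sur by blast
      then show "y \<in> extv f ` tverts" using e by (metis image_eqI)
    qed
  qed
  have surj: "surj (extv f)"
  proof -
    have "y \<in> range (extv f)" for y
    proof (cases "y \<in> tverts")
      case True then show ?thesis using im by blast
    next
      case False then have "extv f y = y" using o by simp
      then show ?thesis by (metis rangeI)
    qed
    then show ?thesis by blast
  qed
  have out: "\<forall>x. x \<notin> tverts \<longrightarrow> extv f x = x" using o by simp
  have adj: "\<forall>u\<in>tverts. \<forall>w\<in>tverts. tadj (extv f u) (extv f w) \<longleftrightarrow> tadj u w"
    using q e by (simp add: Qc_def)
  have a: "extv f \<in> tAut" unfolding tAut_def using inj surj im out adj by (simp add: bij_def)
  have s: "\<forall>v\<in>tverts. sigma (extv f) v \<in> H"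
  proof
    fix v :: "'a list" assume v: "v \<in> tverts"
    show "sigma (extv f) v \<in> H" using q sigma_ext[OF v, of f] v by (simp add: Qc_def)
  qed
  have r: "extv f [] = []" using q e[OF tverts_Nil] by (simp add: Qc_def)
  show ?thesis using a s r by (simp add: fixU_def U_def)
qed


lemma loc_fail: fixes f :: "'a::finite list \<Rightarrow> 'a list"
  assumes nq: "\<not> Qc H f"
  shows "\<exists>D. finite D \<and> D \<subseteq> tverts \<and> (\<forall>f'. (\<forall>d\<in>D. f' d = f d) \<longrightarrow> \<not> Qc H f')"
proof -
  consider (a) "f [] \<noteq> []"
    | (b) u w where "u \<in> tverts" "w \<in> tverts" "f u = f w" "u \<noteq> w"
    | (c) u w where "u \<in> tverts" "w \<in> tverts" "\<not> (tadj (f u) (f w) \<longleftrightarrow> tadj u w)"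
    | (d) v where "v \<in> tverts" "(\<lambda>a. tcol (f v) (f (tnb v a))) \<notin> H"
    using nq unfolding Qc_def by blast
  then show ?thesis
  proof cases
    case a
    show ?thesis
    proof (intro exI[of _ "{[]}"] conjI allI impI)
      fix f' :: "'a list \<Rightarrow> 'a list" assume "\<forall>d\<in>{[]}. f' d = f d"
      then show "\<not> Qc H f'" using a by (simp add: Qc_def)
    qed auto
  next
    case b
    show ?thesis
    proof (intro exI[of _ "{u, w}"] conjI allI impI)
      fix f' :: "'a list \<Rightarrow> 'a list" assume "\<forall>d\<in>{u, w}. f' d = f d"
      then have "f' u = f' w" using b by simp
      then show "\<not> Qc H f'" using b unfolding Qc_def by blast
    qed (use b in auto)
  next
    case c
    show ?thesis
    proof (intro exI[of _ "{u, w}"] conjI allI impI)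
      fix f' :: "'a list \<Rightarrow> 'a list" assume "\<forall>d\<in>{u, w}. f' d = f d"
      then have "f' u = f u" "f' w = f w" by auto
      then have "\<not> (tadj (f' u) (f' w) \<longleftrightarrow> tadj u w)" using c by simp
      then show "\<not> Qc H f'" using c unfolding Qc_def by blast
    qed (use c in auto)
  next
    case d
    show ?thesis
    proof (intro exI[of _ "insert v (range (tnb v))"] conjI allI impI)
      show "finite (insert v (range (tnb v)))" by simp
      show "insert v (range (tnb v)) \<subseteq> tverts" using nbhd_tverts[OF d(1)] .
      fix f' :: "'a list \<Rightarrow> 'a list" assume ag: "\<forall>d\<in>insert v (range (tnb v)). f' d = f d"
      then have "(\<lambda>a. tcol (f' v) (f' (tnb v a))) = (\<lambda>a. tcol (f v) (f (tnb v a)))" by auto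
      then have "(\<lambda>a. tcol (f' v) (f' (tnb v a))) \<notin> H" using d by simp
      then show "\<not> Qc H f'" using d unfolding Qc_def by blast
    qed
  qed
qed

abbreviation PT :: "('a list \<Rightarrow> 'a list) topology" where
  "PT \<equiv> product_topology (\<lambda>v. discrete_topology (LV v)) tverts"

lemma nbhd_open: assumes fP: "f \<in> PiE tverts LV" and D: "finite D" "D \<subseteq> tverts"
  shows "openin PT {f' \<in> PiE tverts LV. \<forall>d\<in>D. f' d = f d}"
proof -
  define X where "X i = (if i \<in> D then {f i} else LV i)" for i
  have "openin PT (PiE tverts X)"
  proof (rule product_topology_basis)
    fix i show "openin (discrete_topology (LV i)) (X i)"
      using fP D(2) by (auto simp: X_def PiE_def Pi_def)
  next
    have "{i. X i \<noteq> topspace (discrete_topology (LV i))} \<subseteq> D" by (auto simp: X_def)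
    then show "finite {i. X i \<noteq> topspace (discrete_topology (LV i))}" using D(1) finite_subset by blast
  qed
  moreover have "PiE tverts X = {f' \<in> PiE tverts LV. \<forall>d\<in>D. f' d = f d}"
  proof
    show "PiE tverts X \<subseteq> {f' \<in> PiE tverts LV. \<forall>d\<in>D. f' d = f d}"
    proof
      fix f' assume h: "f' \<in> PiE tverts X"
      have "f' \<in> PiE tverts LV"
        using h fP by (auto simp: PiE_def Pi_def X_def split: if_splits)
      moreover have "\<forall>d\<in>D. f' d = f d" using h D(2) by (auto simp: PiE_def Pi_def X_def)
      ultimately show "f' \<in> {f' \<in> PiE tverts LV. \<forall>d\<in>D. f' d = f d}" by blast
    qed
    show "{f' \<in> PiE tverts LV. \<forall>d\<in>D. f' d = f d} \<subseteq> PiE tverts X"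
      by (auto simp: PiE_def Pi_def X_def)
  qed
  ultimately show ?thesis by simp
qed

lemma C_closed: fixes H :: "('a::finite \<Rightarrow> 'a) set"
  shows "closedin PT {f \<in> PiE tverts LV. Qc H f}"
proof -
  have "openin PT (PiE tverts LV - {f \<in> PiE tverts LV. Qc H f})"
  proof (subst openin_subopen, intro ballI)
    fix f assume f: "f \<in> PiE tverts LV - {f \<in> PiE tverts LV. Qc H f}"
    then have fP: "f \<in> PiE tverts LV" and nq: "\<not> Qc H f" by auto
    obtain D where D: "finite D" "D \<subseteq> tverts" "\<forall>f'. (\<forall>d\<in>D. f' d = f d) \<longrightarrow> \<not> Qc H f'"
      using loc_fail[OF nq] by blast
    let ?N = "{f' \<in> PiE tverts LV. \<forall>d\<in>D. f' d = f d}"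
    have "openin PT ?N" using nbhd_open[OF fP D(1,2)] .
    moreover have "f \<in> ?N" using fP by simp
    moreover have "?N \<subseteq> PiE tverts LV - {f \<in> PiE tverts LV. Qc H f}" using D(3) by blast
    ultimately show "\<exists>T. openin PT T \<and> f \<in> T \<and> T \<subseteq> PiE tverts LV - {f \<in> PiE tverts LV. Qc H f}"
      by blast
  qed
  then show ?thesis unfolding closedin_def by auto
qed


lemma ext_cont:
  fixes H H' :: "('a::finite \<Rightarrow> 'a) set"
  assumes pg: "perm_group H" "perm_group H'" "H \<subseteq> H'"
  shows "continuous_map (subtopology PT {f \<in> PiE tverts LV. Qc H f}) (Gtop H H') extv"
proof -
  let ?C = "{f \<in> PiE tverts LV. Qc H f}"
  have tsC: "topspace (subtopology PT ?C) = ?C" by auto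
  have KG: "fixU H {[]} \<subseteq> G2 H H'" using fixU_U UH_G2[OF pg(3)] by blast
  have img: "extv ` ?C \<subseteq> topspace (Gtop H H')"
    using Qc_K KG topspace_Gtop[OF pg] by blast
  have "openin (subtopology PT ?C) {f \<in> ?C. extv f \<in> W}" if W: "openin (Gtop H H') W" for W
  proof (subst openin_subopen, intro ballI)
    fix f assume f: "f \<in> {f \<in> ?C. extv f \<in> W}"
    then have fC: "f \<in> ?C" and gW: "extv f \<in> W" by auto
    have fP: "f \<in> PiE tverts LV" using fC by simp
    define g where "g = extv f"
    have gK: "g \<in> fixU H {[]}" unfolding g_def using Qc_K fC by blast
    have gU: "g \<in> U H" using gK fixU_U by blast
    have ga: "g \<in> tAut" using U_aut[OF gU] .
    have "Gpred H H' W" using W by (simp add: openin_Gtop)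
    then have allW: "\<forall>g\<in>W. \<exists>S. finite S \<and> S \<subseteq> tverts \<and> (\<lambda>k. g \<circ> k) ` fixU H S \<subseteq> W"
      by (simp add: Gpred_def)
    have gW': "g \<in> W" using gW g_def by simp
    have "\<exists>S. finite S \<and> S \<subseteq> tverts \<and> (\<lambda>k. g \<circ> k) ` fixU H S \<subseteq> W" using bspec[OF allW gW'] .
    then obtain S where S: "finite S" "S \<subseteq> tverts" "(\<lambda>k. g \<circ> k) ` fixU H S \<subseteq> W"
      by blast
    let ?N = "{f' \<in> PiE tverts LV. \<forall>d\<in>S. f' d = f d}"
    have "openin (subtopology PT ?C) (?C \<inter> ?N)"
      using openin_subtopology_Int2[OF nbhd_open[OF fP S(1,2)]] .
    moreover have "f \<in> ?C \<inter> ?N" using fC by simp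
    moreover have "?C \<inter> ?N \<subseteq> {f \<in> ?C. extv f \<in> W}"
    proof
      fix f' assume f': "f' \<in> ?C \<inter> ?N"
      define g' where "g' = extv f'"
      have g'K: "g' \<in> fixU H {[]}" unfolding g'_def using Qc_K f' by blast
      have g'U: "g' \<in> U H" using g'K fixU_U by blast
      define k where "k = inv g \<circ> g'"
      have kU: "k \<in> U H" unfolding k_def using U_comp[OF pg(1) U_inv[OF pg(1) gU] g'U] .
      have "k s = s" if s: "s \<in> S" for s
      proof -
        have st: "s \<in> tverts" using s S(2) by blast
        have "g' s = f' s" "g s = f s" unfolding g'_def g_def extv_def using st by auto
        moreover have "f' s = f s" using f' s by auto
        ultimately have "g' s = g s" by simp
        then show ?thesis unfolding k_def using aut_inv_f[OF ga] by simp
      qed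
      then have "k \<in> fixU H S" using kU by (simp add: fixU_def)
      moreover have "g \<circ> k = g'" unfolding k_def using aut_comp_inv[OF ga] by (simp add: o_assoc)
      ultimately have "g' \<in> (\<lambda>k. g \<circ> k) ` fixU H S" by (metis image_eqI)
      then have "g' \<in> W" using S(3) by blast
      then show "f' \<in> {f \<in> ?C. extv f \<in> W}" using f' unfolding g'_def by blast
    qed
    ultimately show "\<exists>T. openin (subtopology PT ?C) T \<and> f \<in> T \<and> T \<subseteq> {f \<in> ?C. extv f \<in> W}"
      by blast
  qed
  then show ?thesis unfolding continuous_map using img tsC by auto
qed

lemma K_compact:
  fixes H H' :: "('a::finite \<Rightarrow> 'a) set"
  assumes pg: "perm_group H" "perm_group H'" "H \<subseteq> H'"
  shows "compactin (Gtop H H') (fixU H {[]})"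
proof -
  let ?C = "{f \<in> PiE tverts LV. Qc H f}"
  have "\<forall>i\<in>(tverts :: 'a list set). compact_space (discrete_topology (LV i))"
  proof
    fix i :: "'a list"
    show "compact_space (discrete_topology (LV i))" using LV_finite[of i] compact_space_discrete_topology by blast
  qed
  then have cs: "compact_space (PT :: ('a list \<Rightarrow> 'a list) topology)"
    unfolding compact_space_product_topology by blast
  have "compactin PT ?C" using closedin_compact_space[OF cs C_closed] .
  then have "compactin (subtopology PT ?C) ?C" by (simp add: compactin_subtopology)
  then have c: "compactin (Gtop H H') (extv ` ?C)" using image_compactin ext_cont[OF pg] by blast
  have "extv ` ?C = fixU H {[]}"
  proof
    show "extv ` ?C \<subseteq> fixU H {[]}" using Qc_K by blast
    show "fixU H {[]} \<subseteq> extv ` ?C"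
    proof
      fix k assume kK: "k \<in> fixU H {[]}"
      then have ka: "k \<in> tAut" and k0: "k [] = []" using fixU_U U_aut by (auto simp: fixU_def)
      define f where "f = restrict k tverts"
      have "f \<in> PiE tverts LV"
        unfolding f_def LV_def using aut_tverts[OF ka] len_pres[OF ka k0] by auto
      moreover have ef: "extv f = k"
      proof (rule HOL.ext)
        fix x show "extv f x = k x" using aut_out[OF ka, of x] by (simp add: extv_def f_def)
      qed
      moreover have "Qc H f" using K_Qc kK ef by metis
      ultimately show "k \<in> extv ` ?C" by (metis (mono_tags, lifting) image_eqI mem_Collect_eq)
    qed
  qed
  then show ?thesis using c by simp
qed




theorem mainTheorem10:
  fixes F F' H H' :: "('a::finite \<Rightarrow> 'a) set"
  assumes "CARD('a) \<ge> 3"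
    and "perm_group F" "perm_group F'" "perm_group H" "perm_group H'"
    and "F \<subseteq> F'" "F' \<subseteq> hat F" "H \<subseteq> H'" "H' \<subseteq> hat H"
    and "F \<subseteq> H" "F' \<subseteq> H'"
    and "H \<inter> F' = F" "H' = setprod H F'"
  shows "is_subgroup (G2 F F') (G2 H H')
         \<and> closedin (Gtop H H') (G2 F F')
         \<and> cocompact (Gtop H H') (G2 F F')
         \<and> (acts_freely F \<longrightarrow> cocompact_lattice (Gtop H H') (G2 F F'))"
proof -
  note pF = assms(2) and pF' = assms(3) and pH = assms(4) and pH' = assms(5)
  note FF' = assms(6) and F'h = assms(7) and HH' = assms(8) and FH = assms(10) and F'H' = assms(11)
  note HF' = assms(12) and H'eq = assms(13)
  have sub: "G2 F F' \<subseteq> G2 H H'" using G2_mono[OF FH F'H'] .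
  have sg: "is_subgroup (G2 F F') (G2 H H')"
    unfolding is_subgroup_def using sub G2_id[OF pF pF'] G2_comp[OF pF pF'] G2_inv[OF pF pF'] by blast
  have cl: "closedin (Gtop H H') (G2 F F')" using closed_part[OF pH pH' HH' FH F'H' HF'] .
  have cc: "cocompact (Gtop H H') (G2 F F')"
    unfolding cocompact_def
  proof (intro exI conjI)
    show "compactin (Gtop H H') (fixU H {[]})" using K_compact[OF pH pH' HH'] .
    show "{k \<circ> \<gamma> |k \<gamma>. k \<in> fixU H {[]} \<and> \<gamma> \<in> G2 F F'} = topspace (Gtop H H')"
    proof
      show "{k \<circ> \<gamma> |k \<gamma>. k \<in> fixU H {[]} \<and> \<gamma> \<in> G2 F F'} \<subseteq> topspace (Gtop H H')"
      proof
        fix x assume "x \<in> {k \<circ> \<gamma> |k \<gamma>. k \<in> fixU H {[]} \<and> \<gamma> \<in> G2 F F'}"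
        then obtain k \<gamma> where k: "k \<in> fixU H {[]}" "\<gamma> \<in> G2 F F'" "x = k \<circ> \<gamma>" by blast
        have "k \<in> G2 H H'" using k(1) fixU_U UH_G2[OF HH'] by blast
        moreover have "\<gamma> \<in> G2 H H'" using k(2) sub by blast
        ultimately have "x \<in> G2 H H'" using G2_comp[OF pH pH'] k(3) by blast
        then show "x \<in> topspace (Gtop H H')" using topspace_Gtop[OF pH pH' HH'] by simp
      qed
      show "topspace (Gtop H H') \<subseteq> {k \<circ> \<gamma> |k \<gamma>. k \<in> fixU H {[]} \<and> \<gamma> \<in> G2 F F'}"
      proof
        fix g assume "g \<in> topspace (Gtop H H')"
        then have g: "g \<in> G2 H H'" using topspace_Gtop[OF pH pH' HH'] by simp
        obtain k \<gamma> where "k \<in> fixU H {[]}" "\<gamma> \<in> G2 F F'" "g = k \<circ> \<gamma>"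
          using decomp[OF pF pF' pH pH' FF' F'h FH F'H' HH' HF' H'eq g] by blast
        then show "g \<in> {k \<circ> \<gamma> |k \<gamma>. k \<in> fixU H {[]} \<and> \<gamma> \<in> G2 F F'}" by blast
      qed
    qed
  qed
  have lat: "acts_freely F \<longrightarrow> cocompact_lattice (Gtop H H') (G2 F F')"
  proof
    assume fr: "acts_freely F"
    show "cocompact_lattice (Gtop H H') (G2 F F')"
      unfolding cocompact_lattice_def
      using discrete_part[OF pH pH' HH' pF pF' FH F'H' HF' fr] cc by blast
  qed
  show ?thesis using sg cl cc lat by blast
qed


end
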